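(* Let $1\le S\le N$ and $\mathcal{A}=\{A\subseteq\{1,\dots,N\}:|A|\le S\}$. Let $X_1,\dots,X_N$ be i.i.d. random variables taking values $H$ and $L$, $H>L>0$, with probabilities $p\in(0,1)$ and $1-p$. Then for every $r>1$, $$\sup\{\mathrm{ELR}(\tilde\pi^o): 0<L<H\le rL,\ p\in(0,1)\}\le \frac{S}{S+N},$$ and $$\sup\{\mathrm{ELR}(\tilde\pi^o): 0<L<H,\ p\in(0,1)\}=\frac{S}{S+N}.$$
   Context: This models an auction of $S$ identical items among $N$ unit-demand buyers with values $X_n$ (independent). An allocation rule $\pi$ maps each bid vector $v\in\{L,H\}^N$ to a probability distribution $(\pi_A(v))_{A\in\mathcal{A}}$ on $\mathcal{A}$; $Q_n(v)=\sum_{A\ni n}\pi_A(v)$. The (monotone) virtual valuation is $\overline{w}(H)=H$, $\overline{w}(L)=(L-pH)/(1-p)$. An allocation rule is optimal (the allocation rule of a revenue-maximizing Bayesian incentive compatible, individually rational mechanism) if for every $v$, $\pi(v)$ is supported on $\arg\max_{A\in\mathcal{A}}\sum_{n\in A}\overline{w}(v_n)$. $\tilde\pi^o$ denotes an optimal allocation rule maximizing realized welfare $\mathbb{E}[\sum_nQ_n(X)X_n]$ among optimal allocation rules. $\mathrm{MSW}=\mathbb{E}[\max_{A\in\mathcal{A}}\sum_{n\in A}X_n]$ and $\mathrm{ELR}(\pi)=(\mathrm{MSW}-\mathbb{E}[\sum_nQ_n(X)X_n])/\mathrm{MSW}$. *)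

theory Defs
  imports Complex_Main "HOL-Library.FuncSet"
begin

definition bids :: "nat \<Rightarrow> real \<Rightarrow> real \<Rightarrow> (nat \<Rightarrow> real) set" where
  "bids N L H = PiE {1..N} (\<lambda>_. {L, H})"

definition feas :: "nat \<Rightarrow> nat \<Rightarrow> nat set set" where
  "feas N S = {A. A \<subseteq> {1..N} \<and> card A \<le> S}"

definition vprob :: "nat \<Rightarrow> real \<Rightarrow> real \<Rightarrow> (nat \<Rightarrow> real) \<Rightarrow> real" where
  "vprob N H p v = (\<Prod>n\<in>{1..N}. if v n = H then p else 1 - p)"

definition expect :: "nat \<Rightarrow> real \<Rightarrow> real \<Rightarrow> real \<Rightarrow> ((nat \<Rightarrow> real) \<Rightarrow> real) \<Rightarrow> real" where
  "expect N L H p f = (\<Sum>v\<in>bids N L H. vprob N H p v * f v)"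

definition vval :: "real \<Rightarrow> real \<Rightarrow> real \<Rightarrow> real \<Rightarrow> real" where
  "vval L H p x = (if x = H then H else (L - p * H) / (1 - p))"

definition is_alloc :: "nat \<Rightarrow> nat \<Rightarrow> real \<Rightarrow> real \<Rightarrow> ((nat \<Rightarrow> real) \<Rightarrow> nat set \<Rightarrow> real) \<Rightarrow> bool" where
  "is_alloc N S L H \<pi> \<longleftrightarrow>
     (\<forall>v\<in>bids N L H. (\<forall>A\<in>feas N S. 0 \<le> \<pi> v A) \<and> (\<Sum>A\<in>feas N S. \<pi> v A) = 1)"

definition Qn :: "nat \<Rightarrow> nat \<Rightarrow> ((nat \<Rightarrow> real) \<Rightarrow> nat set \<Rightarrow> real) \<Rightarrow> nat \<Rightarrow> (nat \<Rightarrow> real) \<Rightarrow> real" where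
  "Qn N S \<pi> n v = (\<Sum>A\<in>{A\<in>feas N S. n \<in> A}. \<pi> v A)"

definition welfare :: "nat \<Rightarrow> nat \<Rightarrow> real \<Rightarrow> real \<Rightarrow> real \<Rightarrow> ((nat \<Rightarrow> real) \<Rightarrow> nat set \<Rightarrow> real) \<Rightarrow> real" where
  "welfare N S L H p \<pi> = expect N L H p (\<lambda>v. \<Sum>n\<in>{1..N}. Qn N S \<pi> n v * v n)"

definition MSW :: "nat \<Rightarrow> nat \<Rightarrow> real \<Rightarrow> real \<Rightarrow> real \<Rightarrow> real" where
  "MSW N S L H p = expect N L H p (\<lambda>v. Max ((\<lambda>A. \<Sum>n\<in>A. v n) ` feas N S))"

definition ELR :: "nat \<Rightarrow> nat \<Rightarrow> real \<Rightarrow> real \<Rightarrow> real \<Rightarrow> ((nat \<Rightarrow> real) \<Rightarrow> nat set \<Rightarrow> real) \<Rightarrow> real" where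
  "ELR N S L H p \<pi> = (MSW N S L H p - welfare N S L H p \<pi>) / MSW N S L H p"

definition optimal :: "nat \<Rightarrow> nat \<Rightarrow> real \<Rightarrow> real \<Rightarrow> real \<Rightarrow> ((nat \<Rightarrow> real) \<Rightarrow> nat set \<Rightarrow> real) \<Rightarrow> bool" where
  "optimal N S L H p \<pi> \<longleftrightarrow> is_alloc N S L H \<pi> \<and>
     (\<forall>v\<in>bids N L H. \<forall>A\<in>feas N S. \<pi> v A \<noteq> 0 \<longrightarrow>
        (\<forall>B\<in>feas N S. (\<Sum>n\<in>B. vval L H p (v n)) \<le> (\<Sum>n\<in>A. vval L H p (v n))))"

definition welfare_max_optimal :: "nat \<Rightarrow> nat \<Rightarrow> real \<Rightarrow> real \<Rightarrow> real \<Rightarrow> ((nat \<Rightarrow> real) \<Rightarrow> nat set \<Rightarrow> real) \<Rightarrow> bool" where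
  "welfare_max_optimal N S L H p \<pi> \<longleftrightarrow> optimal N S L H p \<pi> \<and>
     (\<forall>\<pi>'. optimal N S L H p \<pi>' \<longrightarrow> welfare N S L H p \<pi>' \<le> welfare N S L H p \<pi>)"

end

theory Submission
  imports Defs
begin

definition bw :: "nat \<Rightarrow> real \<Rightarrow> nat \<Rightarrow> real" where
  "bw N p k = real (N choose k) * p ^ k * (1 - p) ^ (N - k)"

lemma bw_nonneg: "0 \<le> p \<Longrightarrow> p \<le> 1 \<Longrightarrow> 0 \<le> bw N p k"
  unfolding bw_def by simp

lemma bw_sum: "(\<Sum>k\<le>N. bw N p k) = 1"
proof -
  have "(p + (1 - p)) ^ N = (\<Sum>k\<le>N. real (N choose k) * p ^ k * (1 - p) ^ (N - k))"
    by (rule binomial_ring)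
  then show ?thesis by (simp add: bw_def)
qed

lemma bw_sb:
  "(\<Sum>k\<le>Suc n. bw (Suc n) p k * real k * h k) = real (Suc n) * p * (\<Sum>j\<le>n. bw n p j * h (Suc j))"
proof -
  have "(\<Sum>k\<le>Suc n. bw (Suc n) p k * real k * h k) = (\<Sum>j\<le>n. bw (Suc n) p (Suc j) * real (Suc j) * h (Suc j))"
    by (subst sum.atMost_Suc_shift) simp
  also have "\<dots> = (\<Sum>j\<le>n. real (Suc n) * p * (bw n p j * h (Suc j)))"
  proof (rule sum.cong[OF refl])
    fix j assume "j \<in> {..n}"
    have e: "real (Suc n choose Suc j) * real (Suc j) = real (Suc n) * real (n choose j)"
      using Suc_times_binomial_eq[of n j] by (metis of_nat_mult)
    show "bw (Suc n) p (Suc j) * real (Suc j) * h (Suc j) = real (Suc n) * p * (bw n p j * h (Suc j))"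
      proof -
      have "bw (Suc n) p (Suc j) * real (Suc j) * h (Suc j) = (real (Suc n choose Suc j) * real (Suc j)) * (p * p ^ j * (1 - p) ^ (n - j) * h (Suc j))"
        unfolding bw_def by (simp add: ac_simps)
      also have "\<dots> = real (Suc n) * p * (bw n p j * h (Suc j))"
        unfolding e bw_def by (simp add: ac_simps)
      finally show ?thesis .
    qed
  qed
  also have "\<dots> = real (Suc n) * p * (\<Sum>j\<le>n. bw n p j * h (Suc j))"
    by (simp add: sum_distrib_left)
  finally show ?thesis .
qed

lemma bw_mean: "(\<Sum>k\<le>N. bw N p k * real k) = real N * p"
proof (cases N)
  case 0 then show ?thesis by simp
next
  case (Suc n)
  have "(\<Sum>k\<le>N. bw N p k * real k) = (\<Sum>k\<le>Suc n. bw (Suc n) p k * real k * (\<lambda>_. 1) k)"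
    using Suc by simp
  also have "\<dots> = real (Suc n) * p * (\<Sum>j\<le>n. bw n p j * 1)" by (rule bw_sb)
  finally show ?thesis using Suc bw_sum[of n p] by simp
qed

lemma tangent_inv: fixes x a :: real assumes "0 < x" "0 < a" shows "2 / a - x / a^2 \<le> 1 / x"
proof -
  have "0 \<le> (a - x)^2" by simp
  then have "2 * a * x - x^2 \<le> a^2" by (simp add: power2_eq_square algebra_simps)
  then show ?thesis using assms by (simp add: field_simps power2_eq_square)
qed

lemma min_lower:
  assumes "1 \<le> S" shows "real k * (real S / (real S + real k - 1)) \<le> real (min k S)"
proof (cases "k = 0")
  case True then show ?thesis by simp
next
  case False
  then have pos: "0 < real S + real k - 1" using assms by simp
  show ?thesis
  proof (cases "k \<le> S")
    case True
    have "real k * real S \<le> real k * (real S + real k - 1)" using False by (intro mult_left_mono) auto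
    then show ?thesis using True pos by (simp add: field_simps min_def)
  next
    case False
    have "real k * real S \<le> real S * (real S + real k - 1)" using False assms by (simp add: algebra_simps)
    then show ?thesis using False pos by (simp add: field_simps min_def)
  qed
qed

definition Mm :: "nat \<Rightarrow> nat \<Rightarrow> real \<Rightarrow> real" where
  "Mm N S p = (\<Sum>k\<le>N. bw N p k * real (min k S))"

lemma Mm_low:
  assumes S: "1 \<le> S" and p: "0 \<le> p" "p \<le> 1" and N: "1 \<le> N"
  shows "real N * p * real S / (real S + real N * p) \<le> Mm N S p"
proof -
  obtain n where n: "N = Suc n" using N by (cases N) auto
  define h where "h k = real S / (real S + real k - 1)" for k :: nat
  define m where "m = real n * p"
  have m0: "0 \<le> m" using p by (simp add: m_def)
  have Spos: "0 < real S" using S by simp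
  have "(\<Sum>k\<le>N. bw N p k * real k * h k) \<le> Mm N S p"
    unfolding Mm_def
  proof (intro sum_mono)
    fix k assume "k \<in> {..N}"
    have "bw N p k * (real k * h k) \<le> bw N p k * real (min k S)"
      using bw_nonneg[OF p] min_lower[OF S, of k] unfolding h_def by (intro mult_left_mono) auto
    then show "bw N p k * real k * h k \<le> bw N p k * real (min k S)" by (simp add: mult.assoc)
  qed
  moreover have "(\<Sum>k\<le>N. bw N p k * real k * h k) = real N * p * (\<Sum>j\<le>n. bw n p j * h (Suc j))"
    unfolding n by (rule bw_sb)
  moreover have "real S / (real S + m) \<le> (\<Sum>j\<le>n. bw n p j * h (Suc j))"
  proof -
    have "(\<Sum>j\<le>n. bw n p j * (real S * (2 / (real S + m) - (real S + real j) / (real S + m)^2)))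
        \<le> (\<Sum>j\<le>n. bw n p j * h (Suc j))"
    proof (intro sum_mono mult_left_mono bw_nonneg p)
      fix j assume "j \<in> {..n}"
      have "2 / (real S + m) - (real S + real j) / (real S + m)^2 \<le> 1 / (real S + real j)"
        using Spos m0 by (intro tangent_inv) auto
      then have "real S * (2 / (real S + m) - (real S + real j) / (real S + m)^2) \<le> real S * (1 / (real S + real j))"
        using Spos by (intro mult_left_mono) auto
      then show "real S * (2 / (real S + m) - (real S + real j) / (real S + m)^2) \<le> h (Suc j)"
        by (simp add: h_def)
    qed
    moreover have "(\<Sum>j\<le>n. bw n p j * (real S * (2 / (real S + m) - (real S + real j) / (real S + m)^2)))
       = real S * (2 / (real S + m) - (real S + m) / (real S + m)^2)"
    proof -
      have "(\<Sum>j\<le>n. bw n p j * (real S * (2 / (real S + m) - (real S + real j) / (real S + m)^2)))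
        = real S * (2 / (real S + m) - real S / (real S + m)^2) * (\<Sum>j\<le>n. bw n p j)
          - real S / (real S + m)^2 * (\<Sum>j\<le>n. bw n p j * real j)"
      proof -
        have "(\<Sum>j\<le>n. bw n p j * (real S * (2 / (real S + m) - (real S + real j) / (real S + m)^2)))
          = (\<Sum>j\<le>n. real S * (2 / (real S + m) - real S / (real S + m)^2) * bw n p j
                - real S / (real S + m)^2 * (bw n p j * real j))"
          by (rule sum.cong[OF refl]) (simp add: algebra_simps add_divide_distrib)
        also have "\<dots> = real S * (2 / (real S + m) - real S / (real S + m)^2) * (\<Sum>j\<le>n. bw n p j)
          - real S / (real S + m)^2 * (\<Sum>j\<le>n. bw n p j * real j)"
          by (simp add: sum_subtractf sum_distrib_left)
        finally show ?thesis .
      qed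
      also have "\<dots> = real S * (2 / (real S + m) - (real S + m) / (real S + m)^2)"
        unfolding bw_sum bw_mean m_def[symmetric] by (simp add: algebra_simps add_divide_distrib)
      finally show ?thesis .
    qed
    moreover have "real S * (2 / (real S + m) - (real S + m) / (real S + m)^2) = real S / (real S + m)"
    proof -
      have "(real S + m) / (real S + m)^2 = 1 / (real S + m)" using Spos m0 by (simp add: power2_eq_square)
      then show ?thesis by simp
    qed
    ultimately show ?thesis by simp
  qed
  ultimately have "real N * p * (real S / (real S + m)) \<le> Mm N S p"
  proof -
    assume f1: "(\<Sum>k\<le>N. bw N p k * real k * h k) \<le> Mm N S p"
      and f2: "(\<Sum>k\<le>N. bw N p k * real k * h k) = real N * p * (\<Sum>j\<le>n. bw n p j * h (Suc j))"
      and f3: "real S / (real S + m) \<le> (\<Sum>j\<le>n. bw n p j * h (Suc j))"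
    have "real N * p * (real S / (real S + m)) \<le> real N * p * (\<Sum>j\<le>n. bw n p j * h (Suc j))"
      using f3 p by (intro mult_left_mono) auto
    then show ?thesis using f1 f2 by linarith
  qed
  moreover have "real N * p * real S / (real S + real N * p) \<le> real N * p * (real S / (real S + m))"
  proof -
    have "m \<le> real N * p" using p n by (simp add: m_def mult_right_mono)
    then have "real S / (real S + real N * p) \<le> real S / (real S + m)"
      using Spos m0 by (intro divide_left_mono) auto
    then have "real N * p * (real S / (real S + real N * p)) \<le> real N * p * (real S / (real S + m))"
      using p by (intro mult_left_mono) auto
    then show ?thesis by simp
  qed
  ultimately show ?thesis by linarith
qed


definition Hs :: "nat \<Rightarrow> real \<Rightarrow> (nat \<Rightarrow> real) \<Rightarrow> nat set" where
  "Hs N H v = {n\<in>{1..N}. v n = H}"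

definition vec :: "nat \<Rightarrow> real \<Rightarrow> real \<Rightarrow> nat set \<Rightarrow> nat \<Rightarrow> real" where
  "vec N L H T = (\<lambda>n. if n \<in> {1..N} then (if n \<in> T then H else L) else undefined)"

lemma sum_Pow_card:
  assumes "finite A"
  shows "(\<Sum>T\<in>Pow A. G (card T)) = (\<Sum>k\<le>card A. real (card A choose k) * G k)"
proof -
  have "(\<Sum>T\<in>Pow A. G (card T)) = (\<Sum>k\<le>card A. \<Sum>T\<in>{T\<in>Pow A. card T = k}. G (card T))"
    by (rule sum.group[symmetric]) (use assms in \<open>auto intro: card_mono\<close>)
  also have "\<dots> = (\<Sum>k\<le>card A. real (card A choose k) * G k)"
  proof (rule sum.cong[OF refl])
    fix k
    have "(\<Sum>T\<in>{T\<in>Pow A. card T = k}. G (card T)) = (\<Sum>T\<in>{T\<in>Pow A. card T = k}. G k)"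
      by (rule sum.cong) auto
    also have "\<dots> = real (card {T\<in>Pow A. card T = k}) * G k" by simp
    also have "{T\<in>Pow A. card T = k} = {B. B \<subseteq> A \<and> card B = k}" by auto
    finally show "(\<Sum>T\<in>{T\<in>Pow A. card T = k}. G (card T)) = real (card A choose k) * G k"
      using n_subsets[OF assms, of k] by simp
  qed
  finally show ?thesis .
qed

lemma expect_K:
  assumes LH: "L \<noteq> H"
  shows "expect N L H p (\<lambda>v. f (card (Hs N H v))) = (\<Sum>k\<le>N. bw N p k * f k)"
proof -
  have "expect N L H p (\<lambda>v. f (card (Hs N H v)))
      = (\<Sum>T\<in>Pow {1..N}. p ^ card T * (1 - p) ^ (N - card T) * f (card T))"
    unfolding expect_def
  proof (rule sum.reindex_bij_witness[where i="vec N L H" and j="Hs N H"])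
    fix v assume v: "v \<in> bids N L H"
    show "vec N L H (Hs N H v) = v"
    proof
      fix n show "vec N L H (Hs N H v) n = v n"
        using v unfolding vec_def Hs_def bids_def by (auto simp: PiE_def extensional_def)
    qed
    show "Hs N H v \<in> Pow {1..N}" unfolding Hs_def by auto
    have vp: "vprob N H p v = (\<Prod>n\<in>{1..N}. if n \<in> Hs N H v then p else 1 - p)"
      unfolding vprob_def Hs_def by (rule prod.cong) auto
    have "(\<Prod>n\<in>{1..N}. if n \<in> Hs N H v then p else 1 - p)
        = (\<Prod>n\<in>{1..N} \<inter> {n. n \<in> Hs N H v}. p) * (\<Prod>n\<in>{1..N} \<inter> - {n. n \<in> Hs N H v}. 1 - p)"
      by (rule prod.If_cases) simp
    also have "\<dots> = p ^ card (Hs N H v) * (1 - p) ^ (N - card (Hs N H v))"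
    proof -
      have a: "{1..N} \<inter> {n. n \<in> Hs N H v} = Hs N H v" unfolding Hs_def by auto
      have b: "{1..N} \<inter> - {n. n \<in> Hs N H v} = {1..N} - Hs N H v" by auto
      have c: "card ({1..N} - Hs N H v) = N - card (Hs N H v)"
        by (subst card_Diff_subset) (auto simp: Hs_def)
      show ?thesis unfolding a b using c by simp
    qed
    finally show "p ^ card (Hs N H v) * (1 - p) ^ (N - card (Hs N H v)) * f (card (Hs N H v))
        = vprob N H p v * f (card (Hs N H v))" using vp by simp
  next
    fix T assume T: "T \<in> Pow {1..N}"
    show "Hs N H (vec N L H T) = T" using T LH unfolding Hs_def vec_def by auto
    show "vec N L H T \<in> bids N L H" unfolding bids_def vec_def by (auto simp: PiE_def extensional_def)
  qed
  also have "\<dots> = (\<Sum>k\<le>card {1..N}. real (card {1..N} choose k) * (p ^ k * (1 - p) ^ (N - k) * f k))"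
    by (rule sum_Pow_card) simp
  also have "\<dots> = (\<Sum>k\<le>N. bw N p k * f k)" by (simp add: bw_def mult.assoc)
  finally show ?thesis .
qed


lemma div_le_cross:
  fixes x y a b :: real
  assumes "0 < y" "0 < b" "x * b \<le> a * y"
  shows "x / y \<le> a / b"
  using assms by (simp add: field_simps)

definition mK :: "nat \<Rightarrow> nat \<Rightarrow> real \<Rightarrow> (nat \<Rightarrow> real) \<Rightarrow> nat" where
  "mK N S H v = min (card (Hs N H v)) S"

definition pm :: "((nat \<Rightarrow> real) \<Rightarrow> nat set) \<Rightarrow> (nat \<Rightarrow> real) \<Rightarrow> nat set \<Rightarrow> real" where
  "pm A v B = (if B = A v then 1 else 0)"

lemma LIN:
  fixes x y a b m s :: real
  assumes "y \<le> x" "0 \<le> y" "a \<le> m" "a + b \<le> s"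
  shows "x * a + y * b \<le> x * m + y * (s - m)"
proof -
  have "y * b \<le> y * (s - a)" using assms by (intro mult_left_mono) auto
  moreover have "(x - y) * a \<le> (x - y) * m" using assms by (intro mult_left_mono) auto
  ultimately show ?thesis by (simp add: algebra_simps)
qed

lemma finite_feas: "finite (feas N S)"
  by (rule finite_subset[of _ "Pow {1..N}"]) (auto simp: feas_def)

lemma expect_cong: "(\<And>v. v \<in> bids N L H \<Longrightarrow> f v = g v) \<Longrightarrow> expect N L H p f = expect N L H p g"
  unfolding expect_def by (rule sum.cong) auto

lemma welfare_alt:
  "welfare N S L H p \<pi> = expect N L H p (\<lambda>v. \<Sum>A\<in>feas N S. \<pi> v A * (\<Sum>n\<in>A. v n))"
  unfolding welfare_def
proof (rule expect_cong)
  fix v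
  have "(\<Sum>n\<in>{1..N}. Qn N S \<pi> n v * v n) = (\<Sum>n\<in>{1..N}. \<Sum>A\<in>feas N S. if n \<in> A then \<pi> v A * v n else 0)"
    unfolding Qn_def by (simp add: sum_distrib_right sum.inter_filter[OF finite_feas, symmetric] if_distrib cong: if_cong)
  also have "\<dots> = (\<Sum>A\<in>feas N S. \<Sum>n\<in>{1..N}. if n \<in> A then \<pi> v A * v n else 0)"
    by (rule sum.swap)
  also have "\<dots> = (\<Sum>A\<in>feas N S. \<pi> v A * (\<Sum>n\<in>A. v n))"
  proof (rule sum.cong[OF refl])
    fix A assume "A \<in> feas N S"
    then have "A \<subseteq> {1..N}" by (simp add: feas_def)
    then have "{1..N} \<inter> A = A" by auto
    then show "(\<Sum>n\<in>{1..N}. if n \<in> A then \<pi> v A * v n else 0) = \<pi> v A * (\<Sum>n\<in>A. v n)"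
      by (simp add: sum.inter_filter[symmetric] sum_distrib_left Int_def)
  qed
  finally show "(\<Sum>n\<in>{1..N}. Qn N S \<pi> n v * v n) = (\<Sum>A\<in>feas N S. \<pi> v A * (\<Sum>n\<in>A. v n))" .
qed

lemma pm_alloc: "(\<And>v. v \<in> bids N L H \<Longrightarrow> A v \<in> feas N S) \<Longrightarrow> is_alloc N S L H (pm A)"
  unfolding is_alloc_def pm_def using finite_feas by (auto simp: sum.delta)

lemma pm_val: assumes "A v \<in> feas N S" shows "(\<Sum>B\<in>feas N S. pm A v B * g B) = g (A v)"
proof -
  have "(\<Sum>B\<in>feas N S. pm A v B * g B) = (\<Sum>B\<in>feas N S. if B = A v then g B else 0)"
    by (rule sum.cong) (auto simp: pm_def)
  also have "\<dots> = g (A v)" using finite_feas[of N S] assms by (simp add: sum.delta)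
  finally show ?thesis .
qed

definition AH :: "nat \<Rightarrow> nat \<Rightarrow> real \<Rightarrow> (nat \<Rightarrow> real) \<Rightarrow> nat set" where
  "AH N S H v = (SOME A. A \<subseteq> Hs N H v \<and> card A = mK N S H v)"
definition AL :: "nat \<Rightarrow> nat \<Rightarrow> real \<Rightarrow> (nat \<Rightarrow> real) \<Rightarrow> nat set" where
  "AL N S H v = (SOME A. A \<subseteq> {1..N} - Hs N H v \<and> card A = S - mK N S H v)"
definition Aeff :: "nat \<Rightarrow> nat \<Rightarrow> real \<Rightarrow> (nat \<Rightarrow> real) \<Rightarrow> nat set" where
  "Aeff N S H v = AH N S H v \<union> AL N S H v"

context
  fixes N S :: nat and L H p :: real
  assumes S1: "1 \<le> S" and SN: "S \<le> N" and L0: "0 < L" and LH: "L < H" and p0: "0 < p" and p1: "p < 1"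
begin

lemma sum_split:
  assumes v: "v \<in> bids N L H" and B: "B \<subseteq> {1..N}"
  shows "(\<Sum>n\<in>B. g (v n)) = g H * real (card (B \<inter> Hs N H v)) + g L * real (card (B - Hs N H v))"
proof -
  have fin: "finite B" using B finite_subset by blast
  have "B = (B \<inter> Hs N H v) \<union> (B - Hs N H v)" by auto
  then have "(\<Sum>n\<in>B. g (v n)) = (\<Sum>n\<in>B \<inter> Hs N H v. g (v n)) + (\<Sum>n\<in>B - Hs N H v. g (v n))"
    using fin by (metis Diff_disjoint Int_Diff_disjoint sum.Int_Diff)
  also have "(\<Sum>n\<in>B \<inter> Hs N H v. g (v n)) = (\<Sum>n\<in>B \<inter> Hs N H v. g H)"
    by (rule sum.cong) (auto simp: Hs_def)
  also have "(\<Sum>n\<in>B - Hs N H v. g (v n)) = (\<Sum>n\<in>B - Hs N H v. g L)"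
  proof (rule sum.cong[OF refl])
    fix n assume n: "n \<in> B - Hs N H v"
    then have "n \<in> {1..N}" using B by auto
    then have "v n \<in> {L, H}" using v by (auto simp: bids_def PiE_def Pi_def)
    then show "g (v n) = g L" using n \<open>n \<in> {1..N}\<close> by (auto simp: Hs_def)
  qed
  finally show ?thesis by simp
qed

lemma cardHs: "card (Hs N H v) \<le> N" "card ({1..N} - Hs N H v) = N - card (Hs N H v)"
proof -
  have "Hs N H v \<subseteq> {1..N}" by (auto simp: Hs_def)
  then show "card (Hs N H v) \<le> N" "card ({1..N} - Hs N H v) = N - card (Hs N H v)"
    using card_mono[of "{1..N}"] by (auto simp: card_Diff_subset finite_subset)
qed

lemma feas_counts:
  assumes "B \<in> feas N S"
  shows "card (B \<inter> Hs N H v) \<le> mK N S H v" "card (B \<inter> Hs N H v) + card (B - Hs N H v) \<le> S"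
proof -
  have B: "B \<subseteq> {1..N}" "card B \<le> S" using assms by (auto simp: feas_def)
  have fB: "finite B" using B finite_subset by blast
  have "card (B \<inter> Hs N H v) \<le> card B" using fB by (intro card_mono) auto
  moreover have "card (B \<inter> Hs N H v) \<le> card (Hs N H v)"
    by (intro card_mono) (auto simp: Hs_def)
  ultimately show "card (B \<inter> Hs N H v) \<le> mK N S H v" using B by (simp add: mK_def)
  have "card (B \<inter> Hs N H v) + card (B - Hs N H v) = card B"
    using fB by (metis card_Int_Diff)
  then show "card (B \<inter> Hs N H v) + card (B - Hs N H v) \<le> S" using B by simp
qed

lemma virt_le:
  assumes v: "v \<in> bids N L H" and B: "B \<in> feas N S" and g: "g L \<le> g H" "0 \<le> g L"
  shows "(\<Sum>n\<in>B. g (v n)) \<le> g H * real (mK N S H v) + g L * (real S - real (mK N S H v))"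
proof -
  have "B \<subseteq> {1..N}" using B by (simp add: feas_def)
  then have e: "(\<Sum>n\<in>B. g (v n)) = g H * real (card (B \<inter> Hs N H v)) + g L * real (card (B - Hs N H v))"
    by (rule sum_split[OF v])
  have "real (card (B \<inter> Hs N H v)) \<le> real (mK N S H v)" "real (card (B \<inter> Hs N H v)) + real (card (B - Hs N H v)) \<le> real S"
    using feas_counts[OF B, of v] by (simp_all del: of_nat_add add: of_nat_add[symmetric])
  then show ?thesis unfolding e by (intro LIN g) auto
qed

lemma virt_le_neg:
  assumes v: "v \<in> bids N L H" and B: "B \<in> feas N S" and g: "g L < 0" "0 \<le> g H"
  shows "(\<Sum>n\<in>B. g (v n)) \<le> g H * real (mK N S H v)"
    and "(\<Sum>n\<in>B. g (v n)) = g H * real (mK N S H v) \<Longrightarrow> g H > 0 \<Longrightarrow> (\<Sum>n\<in>B. v n) = H * real (mK N S H v)"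
proof -
  have "B \<subseteq> {1..N}" using B by (simp add: feas_def)
  then have e: "\<And>g. (\<Sum>n\<in>B. g (v n)) = g H * real (card (B \<inter> Hs N H v)) + g L * real (card (B - Hs N H v))"
    by (rule sum_split[OF v])
  have a: "real (card (B \<inter> Hs N H v)) \<le> real (mK N S H v)"
    using feas_counts[OF B, of v] by simp
  have b: "g L * real (card (B - Hs N H v)) \<le> 0" using g by (simp add: mult_nonpos_nonneg)
  have c: "g H * real (card (B \<inter> Hs N H v)) \<le> g H * real (mK N S H v)" using a g by (intro mult_left_mono) auto
  show "(\<Sum>n\<in>B. g (v n)) \<le> g H * real (mK N S H v)" unfolding e using b c by linarith
  assume eq: "(\<Sum>n\<in>B. g (v n)) = g H * real (mK N S H v)" and gH: "g H > 0"
  have "g L * real (card (B - Hs N H v)) = 0" and c2: "g H * real (card (B \<inter> Hs N H v)) = g H * real (mK N S H v)"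
    using eq b c unfolding e by linarith+
  then have "card (B - Hs N H v) = 0" using g by simp
  moreover have "card (B \<inter> Hs N H v) = mK N S H v" using c2 gH by simp
  ultimately show "(\<Sum>n\<in>B. v n) = H * real (mK N S H v)" using e[of "\<lambda>x. x"] by simp
qed



lemma AH_props: "AH N S H v \<subseteq> Hs N H v \<and> card (AH N S H v) = mK N S H v"
proof -
  have "mK N S H v \<le> card (Hs N H v)" by (simp add: mK_def)
  then obtain T where "T \<subseteq> Hs N H v" "card T = mK N S H v" by (rule obtain_subset_with_card_n)
  then show ?thesis unfolding AH_def by (rule someI[where P="\<lambda>A. A \<subseteq> Hs N H v \<and> card A = mK N S H v", OF conjI])
qed

lemma AL_props: "AL N S H v \<subseteq> {1..N} - Hs N H v \<and> card (AL N S H v) = S - mK N S H v"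
proof -
  have "S - mK N S H v \<le> card ({1..N} - Hs N H v)" using cardHs[of v] SN by (auto simp: mK_def)
  then obtain T where "T \<subseteq> {1..N} - Hs N H v" "card T = S - mK N S H v" by (rule obtain_subset_with_card_n)
  then show ?thesis unfolding AL_def by (rule someI[where P="\<lambda>A. A \<subseteq> {1..N} - Hs N H v \<and> card A = S - mK N S H v", OF conjI])
qed

lemma mK_le: "mK N S H v \<le> S" by (simp add: mK_def)

lemma HsN: "Hs N H v \<subseteq> {1..N}" by (auto simp: Hs_def)

lemma AH_feas: "AH N S H v \<in> feas N S"
  using AH_props[of v] HsN[of v] mK_le[of v] unfolding feas_def by auto

lemma Aeff_feas: "Aeff N S H v \<in> feas N S"
proof -
  have f1: "finite (AH N S H v)" using AH_props[of v] HsN[of v] finite_subset[of "AH N S H v" "{1..N}"] by auto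
  have f2: "finite (AL N S H v)" using AL_props[of v] finite_subset[of "AL N S H v" "{1..N}"] by auto
  have d: "AH N S H v \<inter> AL N S H v = {}" using AH_props[of v] AL_props[of v] by auto
  have "card (Aeff N S H v) = card (AH N S H v) + card (AL N S H v)"
    unfolding Aeff_def using f1 f2 d by (rule card_Un_disjoint)
  then have "card (Aeff N S H v) = S" using AH_props[of v] AL_props[of v] mK_le[of v] by simp
  then show ?thesis using AH_props[of v] AL_props[of v] HsN[of v] unfolding feas_def Aeff_def by auto
qed

lemma AH_sum: assumes v: "v \<in> bids N L H"
  shows "(\<Sum>n\<in>AH N S H v. g (v n)) = g H * real (mK N S H v)"
proof -
  have "AH N S H v \<subseteq> {1..N}" using AH_props[of v] HsN[of v] by auto
  then have "(\<Sum>n\<in>AH N S H v. g (v n)) = g H * real (card (AH N S H v \<inter> Hs N H v)) + g L * real (card (AH N S H v - Hs N H v))"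
    by (rule sum_split[OF v])
  moreover have "AH N S H v \<inter> Hs N H v = AH N S H v" "AH N S H v - Hs N H v = {}" using AH_props[of v] by auto
  ultimately show ?thesis using AH_props[of v] by simp
qed

lemma Aeff_sum: assumes v: "v \<in> bids N L H"
  shows "(\<Sum>n\<in>Aeff N S H v. g (v n)) = g H * real (mK N S H v) + g L * (real S - real (mK N S H v))"
proof -
  have "Aeff N S H v \<subseteq> {1..N}" using Aeff_feas[of v] by (simp add: feas_def)
  then have "(\<Sum>n\<in>Aeff N S H v. g (v n)) = g H * real (card (Aeff N S H v \<inter> Hs N H v)) + g L * real (card (Aeff N S H v - Hs N H v))"
    by (rule sum_split[OF v])
  moreover have "Aeff N S H v \<inter> Hs N H v = AH N S H v" "Aeff N S H v - Hs N H v = AL N S H v"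
    using AH_props[of v] AL_props[of v] unfolding Aeff_def by auto
  ultimately show ?thesis using AH_props[of v] AL_props[of v] mK_le[of v] by (simp add: of_nat_diff)
qed

lemma expect_mK: "expect N L H p (\<lambda>v. f (mK N S H v)) = (\<Sum>k\<le>N. bw N p k * f (min k S))"
  unfolding mK_def using expect_K[of L H N p "\<lambda>k. f (min k S)"] LH by simp

lemma MSW_eq: "MSW N S L H p = H * Mm N S p + L * (real S - Mm N S p)"
proof -
  have "MSW N S L H p = expect N L H p (\<lambda>v. H * real (mK N S H v) + L * (real S - real (mK N S H v)))"
    unfolding MSW_def
  proof (rule expect_cong)
    fix v assume v: "v \<in> bids N L H"
    show "Max ((\<lambda>A. \<Sum>n\<in>A. v n) ` feas N S) = H * real (mK N S H v) + L * (real S - real (mK N S H v))"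
    proof (rule Max_eqI)
      show "finite ((\<lambda>A. \<Sum>n\<in>A. v n) ` feas N S)" using finite_feas by simp
      show "H * real (mK N S H v) + L * (real S - real (mK N S H v)) \<in> (\<lambda>A. \<Sum>n\<in>A. v n) ` feas N S"
        using Aeff_sum[OF v, of "\<lambda>x. x"] Aeff_feas[of v] by (intro image_eqI[where x="Aeff N S H v"]) auto
    next
      fix y assume "y \<in> (\<lambda>A. \<Sum>n\<in>A. v n) ` feas N S"
      then obtain B where B: "B \<in> feas N S" "y = (\<Sum>n\<in>B. v n)" by auto
      show "y \<le> H * real (mK N S H v) + L * (real S - real (mK N S H v))"
        using virt_le[OF v B(1), of "\<lambda>x. x"] B(2) LH L0 by simp
    qed
  qed
  also have "\<dots> = (\<Sum>k\<le>N. bw N p k * (H * real (min k S) + L * (real S - real (min k S))))"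
    by (rule expect_mK)
  also have "\<dots> = (H - L) * Mm N S p + L * real S * (\<Sum>k\<le>N. bw N p k)"
    unfolding Mm_def by (simp add: algebra_simps sum.distrib sum_distrib_left sum_subtractf)
  finally show ?thesis by (simp add: bw_sum algebra_simps)
qed

lemma vvalH: "vval L H p H = H" by (simp add: vval_def)
lemma vvalL: "vval L H p L = (L - p * H) / (1 - p)" using LH by (simp add: vval_def)

lemma opt_eff:
  assumes w: "p * H \<le> L"
  shows "optimal N S L H p (pm (Aeff N S H))" "welfare N S L H p (pm (Aeff N S H)) = MSW N S L H p"
proof -
  have g: "vval L H p L \<le> vval L H p H" "0 \<le> vval L H p L"
    unfolding vvalL vvalH using w p1 LH by (simp_all add: field_simps)
  show "optimal N S L H p (pm (Aeff N S H))"
    unfolding optimal_def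
  proof (intro conjI pm_alloc Aeff_feas ballI impI)
    fix v A B assume v: "v \<in> bids N L H" and A: "A \<in> feas N S" and ne: "pm (Aeff N S H) v A \<noteq> 0" and B: "B \<in> feas N S"
    have "A = Aeff N S H v" using ne by (simp add: pm_def split: if_splits)
    then show "(\<Sum>n\<in>B. vval L H p (v n)) \<le> (\<Sum>n\<in>A. vval L H p (v n))"
      using virt_le[OF v B, of "vval L H p", OF g] Aeff_sum[OF v, of "vval L H p"] by simp
  qed
  have "welfare N S L H p (pm (Aeff N S H)) = expect N L H p (\<lambda>v. H * real (mK N S H v) + L * (real S - real (mK N S H v)))"
    unfolding welfare_alt
  proof (rule expect_cong)
    fix v assume v: "v \<in> bids N L H"
    show "(\<Sum>A\<in>feas N S. pm (Aeff N S H) v A * (\<Sum>n\<in>A. v n)) = H * real (mK N S H v) + L * (real S - real (mK N S H v))"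
      using pm_val[of "Aeff N S H" v, OF Aeff_feas] Aeff_sum[OF v, of "\<lambda>x. x"] by simp
  qed
  also have "\<dots> = MSW N S L H p"
    unfolding MSW_def
  proof (rule expect_cong)
    fix v assume v: "v \<in> bids N L H"
    show "H * real (mK N S H v) + L * (real S - real (mK N S H v)) = Max ((\<lambda>A. \<Sum>n\<in>A. v n) ` feas N S)"
    proof (rule Max_eqI[symmetric])
      show "finite ((\<lambda>A. \<Sum>n\<in>A. v n) ` feas N S)" using finite_feas by simp
      show "H * real (mK N S H v) + L * (real S - real (mK N S H v)) \<in> (\<lambda>A. \<Sum>n\<in>A. v n) ` feas N S"
        using Aeff_sum[OF v, of "\<lambda>x. x"] Aeff_feas[of v] by (intro image_eqI[where x="Aeff N S H v"]) auto
    next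
      fix y assume "y \<in> (\<lambda>A. \<Sum>n\<in>A. v n) ` feas N S"
      then obtain B where B: "B \<in> feas N S" "y = (\<Sum>n\<in>B. v n)" by auto
      show "y \<le> H * real (mK N S H v) + L * (real S - real (mK N S H v))"
        using virt_le[OF v B(1), of "\<lambda>x. x"] B(2) LH L0 by simp
    qed
  qed
  finally show "welfare N S L H p (pm (Aeff N S H)) = MSW N S L H p" .
qed

lemma opt_H:
  assumes w: "L < p * H"
  shows "optimal N S L H p (pm (AH N S H))"
    and "\<And>\<pi>. optimal N S L H p \<pi> \<Longrightarrow> welfare N S L H p \<pi> = H * Mm N S p"
proof -
  have g: "vval L H p L < 0" "0 \<le> vval L H p H" "0 < vval L H p H"
    unfolding vvalL vvalH using w p1 LH L0 by (simp_all add: field_simps)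
  show "optimal N S L H p (pm (AH N S H))"
    unfolding optimal_def
  proof (intro conjI pm_alloc AH_feas ballI impI)
    fix v A B assume v: "v \<in> bids N L H" and A: "A \<in> feas N S" and ne: "pm (AH N S H) v A \<noteq> 0" and B: "B \<in> feas N S"
    have "A = AH N S H v" using ne by (simp add: pm_def split: if_splits)
    then show "(\<Sum>n\<in>B. vval L H p (v n)) \<le> (\<Sum>n\<in>A. vval L H p (v n))"
      using virt_le_neg(1)[OF v B, of "vval L H p", OF g(1,2)] AH_sum[OF v, of "vval L H p"] by simp
  qed
  fix \<pi> assume opt: "optimal N S L H p \<pi>"
  have "welfare N S L H p \<pi> = expect N L H p (\<lambda>v. H * real (mK N S H v))"
    unfolding welfare_alt
  proof (rule expect_cong)
    fix v assume v: "v \<in> bids N L H"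
    have "(\<Sum>A\<in>feas N S. \<pi> v A * (\<Sum>n\<in>A. v n)) = (\<Sum>A\<in>feas N S. \<pi> v A * (H * real (mK N S H v)))"
    proof (rule sum.cong[OF refl])
      fix A assume A: "A \<in> feas N S"
      show "\<pi> v A * (\<Sum>n\<in>A. v n) = \<pi> v A * (H * real (mK N S H v))"
      proof (cases "\<pi> v A = 0")
        case False
        then have "(\<Sum>n\<in>AH N S H v. vval L H p (v n)) \<le> (\<Sum>n\<in>A. vval L H p (v n))"
          using opt v A AH_feas[of v] unfolding optimal_def by blast
        then have "(\<Sum>n\<in>A. vval L H p (v n)) = vval L H p H * real (mK N S H v)"
          using virt_le_neg(1)[OF v A, of "vval L H p", OF g(1,2)] AH_sum[OF v, of "vval L H p"] by simp
        then have "(\<Sum>n\<in>A. v n) = H * real (mK N S H v)"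
          by (rule virt_le_neg(2)[OF v A, of "vval L H p", OF g(1,2) _ g(3)])
        then show ?thesis by simp
      qed simp
    qed
    also have "\<dots> = H * real (mK N S H v)"
      using opt v unfolding optimal_def is_alloc_def by (simp add: sum_distrib_right[symmetric])
    finally show "(\<Sum>A\<in>feas N S. \<pi> v A * (\<Sum>n\<in>A. v n)) = H * real (mK N S H v)" .
  qed
  also have "\<dots> = H * Mm N S p"
    using expect_mK[of "\<lambda>x. H * real x"] by (simp add: Mm_def sum_distrib_left ac_simps)
  finally show "welfare N S L H p \<pi> = H * Mm N S p" .
qed



lemma Mm_bounds: "0 \<le> Mm N S p" "Mm N S p \<le> real S" "Mm N S p \<le> real N * p"
  "real N * p * real S / (real S + real N * p) \<le> Mm N S p"
  "real S * (1 - p) ^ N \<le> real S - Mm N S p"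
proof -
  have bn: "\<And>k. 0 \<le> bw N p k" using p0 p1 by (intro bw_nonneg) auto
  show "0 \<le> Mm N S p" unfolding Mm_def using bn by (intro sum_nonneg) auto
  have "Mm N S p \<le> (\<Sum>k\<le>N. bw N p k * real S)" unfolding Mm_def
    using bn by (intro sum_mono mult_left_mono) auto
  then show "Mm N S p \<le> real S" unfolding sum_distrib_right[symmetric] bw_sum by simp
  have "Mm N S p \<le> (\<Sum>k\<le>N. bw N p k * real k)" unfolding Mm_def
    using bn by (intro sum_mono mult_left_mono) auto
  then show "Mm N S p \<le> real N * p" by (simp add: bw_mean)
  show "real N * p * real S / (real S + real N * p) \<le> Mm N S p"
    using Mm_low[of S p N] S1 SN p0 p1 by simp
  have "real S - Mm N S p = (\<Sum>k\<le>N. bw N p k * (real S - real (min k S)))"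
    unfolding Mm_def right_diff_distrib sum_subtractf sum_distrib_right[symmetric] bw_sum by simp
  also have "\<dots> \<ge> bw N p 0 * (real S - real (min 0 S))"
    by (rule member_le_sum) (use bn in \<open>auto intro!: mult_nonneg_nonneg\<close>)
  finally show "real S * (1 - p) ^ N \<le> real S - Mm N S p" by (simp add: bw_def mult.commute)
qed

lemma MSW_pos: "L * real S \<le> MSW N S L H p" "0 < MSW N S L H p"
proof -
  have "L * Mm N S p \<le> H * Mm N S p" using LH Mm_bounds(1) by (intro mult_right_mono) auto
  then show "L * real S \<le> MSW N S L H p" unfolding MSW_eq by (simp add: algebra_simps)
  moreover have "0 < L * real S" using L0 S1 by simp
  ultimately show "0 < MSW N S L H p" by linarith
qed

lemma ELR_upper:
  assumes wm: "welfare_max_optimal N S L H p \<pi>"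
  shows "ELR N S L H p \<pi> \<le> real S / (real S + real N)"
proof (cases "p * H \<le> L")
  case True
  have "welfare N S L H p (pm (Aeff N S H)) \<le> welfare N S L H p \<pi>"
    using wm opt_eff(1)[OF True] unfolding welfare_max_optimal_def by blast
  then have "MSW N S L H p \<le> welfare N S L H p \<pi>" using opt_eff(2)[OF True] by simp
  then have "ELR N S L H p \<pi> \<le> 0" unfolding ELR_def using MSW_pos(2)
    by (simp add: divide_nonpos_pos)
  also have "0 \<le> real S / (real S + real N)" by simp
  finally show ?thesis .
next
  case False
  then have w: "L < p * H" by simp
  define M where "M = Mm N S p"
  have W: "welfare N S L H p \<pi> = H * M" using wm opt_H(2)[OF w] unfolding welfare_max_optimal_def M_def by blast
  have M: "0 \<le> M" "M \<le> real S" "real N * p * real S / (real S + real N * p) \<le> M"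
    using Mm_bounds unfolding M_def by auto
  have Sp: "0 < real S + real N * p" using S1 p0 by (simp add: add_pos_nonneg)
  have k1: "real N * p * real S \<le> M * (real S + real N * p)" using M(3) Sp by (simp add: field_simps)
  then have k2: "real N * p * (real S - M) \<le> real S * M" by (simp add: algebra_simps)
  have k3: "L * (real S - M) \<le> p * H * (real S - M)" using w M by (intro mult_right_mono) auto
  have k4: "real N * L * (real S - M) \<le> H * (real S * M)"
  proof -
    have "real N * L * (real S - M) \<le> real N * (p * H * (real S - M))"
      using k3 by (simp add: mult.assoc mult_left_mono)
    also have "\<dots> = H * (real N * p * (real S - M))" by (simp add: ac_simps)
    also have "\<dots> \<le> H * (real S * M)" using k2 LH L0 by (intro mult_left_mono) auto
    finally show ?thesis .
  qed
  have MSW: "MSW N S L H p = H * M + L * (real S - M)" unfolding MSW_eq M_def ..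
  have "ELR N S L H p \<pi> = L * (real S - M) / (H * M + L * (real S - M))"
    unfolding ELR_def W MSW by simp
  also have "\<dots> \<le> real S / (real S + real N)"
  proof -
    have pos: "0 < H * M + L * (real S - M)" using MSW_pos(2) MSW by simp
    have e1: "L * (real S - M) * (real S + real N) = L * (real S - M) * real S + real N * L * (real S - M)"
      by (simp add: algebra_simps)
    have e2: "real S * (H * M + L * (real S - M)) = H * (real S * M) + L * (real S - M) * real S"
      by (simp add: algebra_simps)
    have c: "L * (real S - M) * (real S + real N) \<le> real S * (H * M + L * (real S - M))"
      unfolding e1 e2 using k4 by linarith
    have d: "0 < real S + real N" using S1 by simp
    show ?thesis by (rule div_le_cross[OF pos d c])
  qed
  finally show ?thesis .
qed

lemma ELR_lowerb:
  assumes w: "L < p * H" and opt: "optimal N S L H p \<pi>"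
  shows "ELR N S L H p \<pi> \<ge> L * real S * (1 - p) ^ N / (H * real N * p + L * real S * (1 - p) ^ N)"
proof -
  define M where "M = Mm N S p"
  have W: "welfare N S L H p \<pi> = H * M" using opt_H(2)[OF w opt] unfolding M_def .
  have M: "M \<le> real N * p" "real S * (1 - p) ^ N \<le> real S - M" "0 \<le> M"
    using Mm_bounds unfolding M_def by auto
  have MSW: "MSW N S L H p = H * M + L * (real S - M)" unfolding MSW_eq M_def ..
  have e: "ELR N S L H p \<pi> = L * (real S - M) / (H * M + L * (real S - M))"
    unfolding ELR_def W MSW by simp
  define X where "X = L * (real S - M)"
  define x0 where "x0 = L * real S * (1 - p) ^ N"
  define Y where "Y = H * M"
  define y0 where "y0 = H * real N * p"
  have x0: "0 < x0" using L0 S1 p1 by (simp add: x0_def)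
  have Xx: "x0 \<le> X" unfolding X_def x0_def using M(2) L0 by (simp add: mult.assoc mult_left_mono)
  have Yy: "Y \<le> y0" "0 \<le> Y" unfolding Y_def y0_def using M LH L0 by (auto simp: mult.assoc intro!: mult_left_mono)
  have "x0 / (y0 + x0) \<le> X / (Y + X)"
  proof -
    have "x0 * Y \<le> X * y0" using Xx Yy x0 by (intro mult_mono) auto
    then have cr: "x0 * (Y + X) \<le> X * (y0 + x0)" by (simp add: algebra_simps)
    have q1: "0 < y0 + x0" "0 < Y + X" using x0 Xx Yy by linarith+
    show ?thesis by (rule div_le_cross[OF q1 cr])
  qed
  then show ?thesis unfolding e X_def x0_def Y_def y0_def .
qed

end


lemma wm_H:
  assumes S1: "1 \<le> S" and SN: "S \<le> N" and p0: "0 < p" and p1: "p < 1" and H1: "1 < H" and w: "1 < p * H"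
  shows "welfare_max_optimal N S 1 H p (pm (AH N S H))"
proof -
  have L0: "(0::real) < 1" by simp
  note o1 = opt_H(1)[OF S1 SN L0 H1 p0 p1 w]
  note o2 = opt_H(2)[OF S1 SN L0 H1 p0 p1 w]
  show ?thesis unfolding welfare_max_optimal_def using o1 o2 by simp
qed

lemma gg_lim:
  assumes "1 \<le> S"
  shows "((\<lambda>p::real. real S * (1 - p) ^ N / ((1 + p) * real N + real S * (1 - p) ^ N))
     \<longlongrightarrow> real S / (real S + real N)) (at_right 0)"
proof -
  have "((\<lambda>p::real. real S * (1 - p) ^ N / ((1 + p) * real N + real S * (1 - p) ^ N))
     \<longlongrightarrow> real S * (1 - 0) ^ N / ((1 + 0) * real N + real S * (1 - 0) ^ N)) (at_right 0)"
    using assms by (intro tendsto_intros) (auto simp: add_pos_nonneg)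
  then show ?thesis by (simp add: add.commute)
qed

theorem proposition4:
  fixes N S :: nat and r :: real
  assumes "1 \<le> S" and "S \<le> N" and "r > 1"
  shows "Sup {ELR N S L H p \<pi> | L H p \<pi>.
            0 < L \<and> L < H \<and> H \<le> r * L \<and> 0 < p \<and> p < 1 \<and> welfare_max_optimal N S L H p \<pi>}
           \<le> real S / (real S + real N) \<and>
         Sup {ELR N S L H p \<pi> | L H p \<pi>.
            0 < L \<and> L < H \<and> 0 < p \<and> p < 1 \<and> welfare_max_optimal N S L H p \<pi>}
           = real S / (real S + real N)"
    (is "Sup ?X1 \<le> ?b \<and> Sup ?X2 = ?b")
proof -
  note S1 = assms(1) and SN = assms(2) and r1 = assms(3)
  have up: "x \<le> ?b" if "x \<in> ?X2" for x
  proof -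
    from that obtain L H p \<pi> where x: "x = ELR N S L H p \<pi>" and c: "0 < L" "L < H" "0 < p" "p < 1"
      and wm: "welfare_max_optimal N S L H p \<pi>" by blast
    show ?thesis unfolding x by (rule ELR_upper[OF S1 SN c wm])
  qed
  define p0 where "p0 = (1 + 1 / r) / 2"
  have p0: "0 < p0" "p0 < 1" "1 < p0 * r" using r1 by (auto simp: p0_def field_simps)
  have wm0: "welfare_max_optimal N S 1 r p0 (pm (AH N S r))" by (rule wm_H[OF S1 SN p0(1,2) r1 p0(3)])
  have mem1: "ELR N S 1 r p0 (pm (AH N S r)) \<in> ?X1"
  proof -
    have "\<exists>L H p \<pi>. ELR N S 1 r p0 (pm (AH N S r)) = ELR N S L H p \<pi> \<and>
            0 < L \<and> L < H \<and> H \<le> r * L \<and> 0 < p \<and> p < 1 \<and> welfare_max_optimal N S L H p \<pi>"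
      using wm0 r1 p0 by (intro exI[of _ 1] exI[of _ r] exI[of _ p0] exI[of _ "pm (AH N S r)"]) simp
    then show ?thesis by simp
  qed
  have mem2: "ELR N S 1 r p0 (pm (AH N S r)) \<in> ?X2"
  proof -
    have "\<exists>L H p \<pi>. ELR N S 1 r p0 (pm (AH N S r)) = ELR N S L H p \<pi> \<and>
            0 < L \<and> L < H \<and> 0 < p \<and> p < 1 \<and> welfare_max_optimal N S L H p \<pi>"
      using wm0 r1 p0 by (intro exI[of _ 1] exI[of _ r] exI[of _ p0] exI[of _ "pm (AH N S r)"]) simp
    then show ?thesis by simp
  qed
  have mem: "ELR N S 1 r p0 (pm (AH N S r)) \<in> ?X1 \<inter> ?X2" using mem1 mem2 by blast
  have ne1: "?X1 \<noteq> {}" using mem1 by blast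
  have ne2: "?X2 \<noteq> {}" using mem2 by blast
  have part1: "Sup ?X1 \<le> ?b"
  proof (rule cSup_least[OF ne1])
    fix x assume "x \<in> ?X1"
    then have "x \<in> ?X2" by blast
    then show "x \<le> ?b" by (rule up)
  qed
  have part2: "Sup ?X2 = ?b"
  proof (rule cSup_eq_non_empty[OF ne2 up])
    fix y assume ub: "\<And>x. x \<in> ?X2 \<Longrightarrow> x \<le> y"
    show "?b \<le> y"
    proof (rule ccontr)
      assume "\<not> ?b \<le> y"
      then have yb: "y < ?b" by simp
      have "\<forall>\<^sub>F p in at_right 0. y < real S * (1 - p) ^ N / ((1 + p) * real N + real S * (1 - p) ^ N)"
        using order_tendstoD(1)[OF gg_lim[OF S1] yb] .
      then obtain c where c: "c > 0" and cc: "\<And>p. 0 < p \<Longrightarrow> p < c \<Longrightarrow> y < real S * (1 - p) ^ N / ((1 + p) * real N + real S * (1 - p) ^ N)"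
        unfolding eventually_at_right[OF zero_less_one] by blast
      define p where "p = min (c / 2) (1 / 2)"
      have p: "0 < p" "p < c" "p < 1" using c by (auto simp: p_def)
      define H where "H = 1 + 1 / p"
      have H: "1 < H" "1 < p * H" using p by (auto simp: H_def field_simps)
      have wm: "welfare_max_optimal N S 1 H p (pm (AH N S H))" by (rule wm_H[OF S1 SN p(1,3) H])
      have "\<exists>L H' p' \<pi>. ELR N S 1 H p (pm (AH N S H)) = ELR N S L H' p' \<pi> \<and>
            0 < L \<and> L < H' \<and> 0 < p' \<and> p' < 1 \<and> welfare_max_optimal N S L H' p' \<pi>"
        using wm p H by (intro exI[of _ 1] exI[of _ H] exI[of _ p] exI[of _ "pm (AH N S H)"]) simp
      then have "ELR N S 1 H p (pm (AH N S H)) \<in> ?X2" by simp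
      then have le: "ELR N S 1 H p (pm (AH N S H)) \<le> y" by (rule ub)
      have "1 * real S * (1 - p) ^ N / (H * real N * p + 1 * real S * (1 - p) ^ N) \<le> ELR N S 1 H p (pm (AH N S H))"
        using ELR_lowerb[OF S1 SN zero_less_one H(1) p(1,3) H(2)] wm unfolding welfare_max_optimal_def by blast
      moreover have "H * real N * p = (1 + p) * real N" using p by (simp add: H_def field_simps)
      ultimately have "real S * (1 - p) ^ N / ((1 + p) * real N + real S * (1 - p) ^ N) \<le> y"
        using le by simp
      with cc[OF p(1,2)] show False by simp
    qed
  qed
  show ?thesis using part1 part2 by simp
qed

end
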